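(* Let $(H,\Delta)$ be a Hopf algebra with invariant functionals and $(A,\alpha)$ an $I$-Galois object. Then there exists a left complete invariant functional $\psi_A:A\to k$, and there exists a right complete invariant functional $\psi'_A:A\to k$.
   Context: $H$ has invariant functionals: nonzero $\varphi,\psi:H\to k$ with $(\mathrm{id}\otimes\varphi)\Delta(h)=\varphi(h)1$, $(\psi\otimes\mathrm{id})\Delta(h)=\psi(h)1$. An $I$-Galois object is a right $H$-comodule algebra $(A,\alpha)$ (possibly non-unital) with bijective Galois map $A\otimes_{A^\alpha}A\to A\otimes H$, $a\otimes b\mapsto(a\otimes1)\alpha(b)$, and coinvariant algebra $A^\alpha$ identified with $k_I=\bigoplus_{i\in I}k$, minimal idempotents $p_i$. A linear functional $\psi_A:A\to k$ is invariant if $(\psi_A\otimes\mathrm{id})\alpha(x)=\psi_A(x)1_H$ for all $x\in A$; it is left complete if $\psi_A(p_i\,\cdot)\ne0$ for every $i\in I$, and right complete if $\psi_A(\cdot\,p_j)\neq0$ for every $j\in I$. *)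

theory Defs
  imports Complex_Main
begin

(* Vector spaces over a field 'k are abstract types with an explicit scalar
   multiplication satisfying Vector_Spaces.vector_space.
   Algebraic tensors V (x) W are represented by finite lists of pure tensors
   [(v1,w1),...]; two representatives denote the same tensor iff they agree
   under all pairs of linear functionals (for vector spaces over a field the
   canonical map V (x) W -> (V^* (x) W^* )^* is injective, so this is exactly
   equality in the algebraic tensor product). *)

definition tev :: "('v \<times> 'w) list \<Rightarrow> ('v \<Rightarrow> 'k::comm_ring) \<Rightarrow> ('w \<Rightarrow> 'k) \<Rightarrow> 'k" where
  "tev t f g = (\<Sum>(v,w)\<leftarrow>t. f v * g w)"

definition teq :: "('k::field \<Rightarrow> 'v::ab_group_add \<Rightarrow> 'v) \<Rightarrow> ('k \<Rightarrow> 'w::ab_group_add \<Rightarrow> 'w)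
    \<Rightarrow> ('v \<times> 'w) list \<Rightarrow> ('v \<times> 'w) list \<Rightarrow> bool" where
  "teq sV sW t u \<longleftrightarrow>
     (\<forall>f g. Vector_Spaces.linear sV ((*)::'k\<Rightarrow>'k\<Rightarrow>'k) f \<longrightarrow> Vector_Spaces.linear sW ((*)::'k\<Rightarrow>'k\<Rightarrow>'k) g
        \<longrightarrow> tev t f g = tev u f g)"

definition tev3 :: "('u \<times> 'v \<times> 'w) list \<Rightarrow> ('u \<Rightarrow> 'k::comm_ring) \<Rightarrow> ('v \<Rightarrow> 'k) \<Rightarrow> ('w \<Rightarrow> 'k) \<Rightarrow> 'k" where
  "tev3 t f g l = (\<Sum>(u,v,w)\<leftarrow>t. f u * g v * l w)"

definition teq3 :: "('k::field \<Rightarrow> 'u::ab_group_add \<Rightarrow> 'u) \<Rightarrow> ('k \<Rightarrow> 'v::ab_group_add \<Rightarrow> 'v)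
    \<Rightarrow> ('k \<Rightarrow> 'w::ab_group_add \<Rightarrow> 'w) \<Rightarrow> ('u \<times> 'v \<times> 'w) list \<Rightarrow> ('u \<times> 'v \<times> 'w) list \<Rightarrow> bool" where
  "teq3 sU sV sW t u \<longleftrightarrow>
     (\<forall>f g l. Vector_Spaces.linear sU ((*)::'k\<Rightarrow>'k\<Rightarrow>'k) f \<longrightarrow> Vector_Spaces.linear sV ((*)::'k\<Rightarrow>'k\<Rightarrow>'k) g
        \<longrightarrow> Vector_Spaces.linear sW ((*)::'k\<Rightarrow>'k\<Rightarrow>'k) l \<longrightarrow> tev3 t f g l = tev3 u f g l)"

definition tlinear :: "('k::field \<Rightarrow> 'x::ab_group_add \<Rightarrow> 'x) \<Rightarrow> ('k \<Rightarrow> 'v::ab_group_add \<Rightarrow> 'v)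
    \<Rightarrow> ('k \<Rightarrow> 'w::ab_group_add \<Rightarrow> 'w) \<Rightarrow> ('x \<Rightarrow> ('v \<times> 'w) list) \<Rightarrow> bool" where
  "tlinear sX sV sW F \<longleftrightarrow>
     (\<forall>f g. Vector_Spaces.linear sV ((*)::'k\<Rightarrow>'k\<Rightarrow>'k) f \<longrightarrow> Vector_Spaces.linear sW ((*)::'k\<Rightarrow>'k\<Rightarrow>'k) g
        \<longrightarrow> Vector_Spaces.linear sX ((*)::'k\<Rightarrow>'k\<Rightarrow>'k) (\<lambda>x. tev (F x) f g))"

definition tmult :: "('v \<Rightarrow> 'v \<Rightarrow> 'v) \<Rightarrow> ('w \<Rightarrow> 'w \<Rightarrow> 'w) \<Rightarrow> ('v \<times> 'w) list \<Rightarrow> ('v \<times> 'w) list \<Rightarrow> ('v \<times> 'w) list" where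
  "tmult mV mW t u = concat (map (\<lambda>(a,b). map (\<lambda>(c,d). (mV a c, mW b d)) u) t)"

definition map_left3 :: "('v \<Rightarrow> ('a \<times> 'b) list) \<Rightarrow> ('v \<times> 'w) list \<Rightarrow> ('a \<times> 'b \<times> 'w) list" where
  "map_left3 F t = concat (map (\<lambda>(v,w). map (\<lambda>(a,b). (a,b,w)) (F v)) t)"

definition map_right3 :: "('w \<Rightarrow> ('a \<times> 'b) list) \<Rightarrow> ('v \<times> 'w) list \<Rightarrow> ('v \<times> 'a \<times> 'b) list" where
  "map_right3 F t = concat (map (\<lambda>(v,w). map (\<lambda>(a,b). (v,a,b)) (F w)) t)"

definition bilinear_mult :: "('k::field \<Rightarrow> 'v::ab_group_add \<Rightarrow> 'v) \<Rightarrow> ('v \<Rightarrow> 'v \<Rightarrow> 'v) \<Rightarrow> bool" where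
  "bilinear_mult s m \<longleftrightarrow> (\<forall>x. Vector_Spaces.linear s s (m x)) \<and> (\<forall>y. Vector_Spaces.linear s s (\<lambda>x. m x y))"

definition k_algebra :: "('k::field \<Rightarrow> 'v::ab_group_add \<Rightarrow> 'v) \<Rightarrow> ('v \<Rightarrow> 'v \<Rightarrow> 'v) \<Rightarrow> bool" where
  "k_algebra s m \<longleftrightarrow> vector_space s \<and> bilinear_mult s m \<and> (\<forall>x y z. m (m x y) z = m x (m y z))"

definition hopf_algebra ::
  "('k::field \<Rightarrow> 'h::ab_group_add \<Rightarrow> 'h) \<Rightarrow> ('h \<Rightarrow> 'h \<Rightarrow> 'h) \<Rightarrow> 'h \<Rightarrow> ('h \<Rightarrow> ('h \<times> 'h) list)
     \<Rightarrow> ('h \<Rightarrow> 'k) \<Rightarrow> ('h \<Rightarrow> 'h) \<Rightarrow> bool" where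
  "hopf_algebra s m u D eps S \<longleftrightarrow>
     k_algebra s m \<and> (\<forall>x. m u x = x \<and> m x u = x) \<and>
     tlinear s s s D \<and>
     (\<forall>x y. teq s s (D (m x y)) (tmult m m (D x) (D y))) \<and>
     teq s s (D u) [(u,u)] \<and>
     (\<forall>x. teq3 s s s (map_left3 D (D x)) (map_right3 D (D x))) \<and>
     Vector_Spaces.linear s ((*)::'k\<Rightarrow>'k\<Rightarrow>'k) eps \<and>
     (\<forall>x y. eps (m x y) = eps x * eps y) \<and> eps u = 1 \<and>
     (\<forall>x. (\<Sum>(a,b)\<leftarrow>D x. s (eps a) b) = x \<and> (\<Sum>(a,b)\<leftarrow>D x. s (eps b) a) = x) \<and>
     Vector_Spaces.linear s s S \<and>
     (\<forall>x. (\<Sum>(a,b)\<leftarrow>D x. m (S a) b) = s (eps x) u \<and> (\<Sum>(a,b)\<leftarrow>D x. m a (S b)) = s (eps x) u)"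

definition has_invariant_functionals ::
  "('k::field \<Rightarrow> 'h::ab_group_add \<Rightarrow> 'h) \<Rightarrow> 'h \<Rightarrow> ('h \<Rightarrow> ('h \<times> 'h) list) \<Rightarrow> bool" where
  "has_invariant_functionals s u D \<longleftrightarrow>
     (\<exists>phi psi. Vector_Spaces.linear s ((*)::'k\<Rightarrow>'k\<Rightarrow>'k) phi \<and> Vector_Spaces.linear s ((*)::'k\<Rightarrow>'k\<Rightarrow>'k) psi \<and>
        (\<exists>x. phi x \<noteq> 0) \<and> (\<exists>x. psi x \<noteq> 0) \<and>
        (\<forall>x. (\<Sum>(a,b)\<leftarrow>D x. s (phi b) a) = s (phi x) u) \<and>
        (\<forall>x. (\<Sum>(a,b)\<leftarrow>D x. s (psi a) b) = s (psi x) u))"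

definition comodule_algebra ::
  "('k::field \<Rightarrow> 'a::ab_group_add \<Rightarrow> 'a) \<Rightarrow> ('a \<Rightarrow> 'a \<Rightarrow> 'a) \<Rightarrow> ('k \<Rightarrow> 'h::ab_group_add \<Rightarrow> 'h)
     \<Rightarrow> ('h \<Rightarrow> 'h \<Rightarrow> 'h) \<Rightarrow> ('h \<Rightarrow> ('h \<times> 'h) list) \<Rightarrow> ('h \<Rightarrow> 'k) \<Rightarrow> ('a \<Rightarrow> ('a \<times> 'h) list) \<Rightarrow> bool" where
  "comodule_algebra sA mA sH mH D eps alpha \<longleftrightarrow>
     k_algebra sA mA \<and> tlinear sA sA sH alpha \<and>
     (\<forall>x y. teq sA sH (alpha (mA x y)) (tmult mA mH (alpha x) (alpha y))) \<and>
     (\<forall>x. teq3 sA sH sH (map_left3 alpha (alpha x)) (map_right3 D (alpha x))) \<and>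
     (\<forall>x. (\<Sum>(a,h)\<leftarrow>alpha x. sA (eps h) a) = x)"

definition coinvariants :: "('k::field \<Rightarrow> 'a::ab_group_add \<Rightarrow> 'a) \<Rightarrow> ('k \<Rightarrow> 'h::ab_group_add \<Rightarrow> 'h) \<Rightarrow> 'h
     \<Rightarrow> ('a \<Rightarrow> ('a \<times> 'h) list) \<Rightarrow> 'a set" where
  "coinvariants sA sH u alpha = {a. teq sA sH (alpha a) [(a,u)]}"

definition galois_map :: "('a \<Rightarrow> 'a \<Rightarrow> 'a) \<Rightarrow> ('a \<Rightarrow> ('a \<times> 'h) list) \<Rightarrow> ('a \<times> 'a) list \<Rightarrow> ('a \<times> 'h) list" where
  "galois_map mA alpha t = concat (map (\<lambda>(a,b). map (\<lambda>(x,h). (mA a x, h)) (alpha b)) t)"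

(* t represents 0 in the balanced tensor product A (x)_B A, i.e. t lies (as an element of
   A (x) A) in the span of the elements  x c (x) y - x (x) c y  with c in B *)
definition balanced_zero :: "('k::field \<Rightarrow> 'a::ab_group_add \<Rightarrow> 'a) \<Rightarrow> ('a \<Rightarrow> 'a \<Rightarrow> 'a) \<Rightarrow> 'a set
     \<Rightarrow> ('a \<times> 'a) list \<Rightarrow> bool" where
  "balanced_zero sA mA B t \<longleftrightarrow>
     (\<exists>rs. (\<forall>(x,c,y)\<in>set rs. c \<in> B) \<and>
        teq sA sA t (concat (map (\<lambda>(x,c,y). [(mA x c, y), (x, sA (-1) (mA c y))]) rs)))"

(* I-Galois object; p i (i in I) are the minimal idempotents of A^alpha = k_I *)
definition I_galois_object ::
  "('k::field \<Rightarrow> 'a::ab_group_add \<Rightarrow> 'a) \<Rightarrow> ('a \<Rightarrow> 'a \<Rightarrow> 'a) \<Rightarrow> ('k \<Rightarrow> 'h::ab_group_add \<Rightarrow> 'h)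
     \<Rightarrow> ('h \<Rightarrow> 'h \<Rightarrow> 'h) \<Rightarrow> 'h \<Rightarrow> ('h \<Rightarrow> ('h \<times> 'h) list) \<Rightarrow> ('h \<Rightarrow> 'k)
     \<Rightarrow> ('a \<Rightarrow> ('a \<times> 'h) list) \<Rightarrow> 'i set \<Rightarrow> ('i \<Rightarrow> 'a) \<Rightarrow> bool" where
  "I_galois_object sA mA sH mH u D eps alpha I p \<longleftrightarrow>
     comodule_algebra sA mA sH mH D eps alpha \<and>
     \<comment> \<open>A^alpha is identified with k_I, with minimal idempotents p i\<close>
     (\<forall>i\<in>I. p i \<noteq> 0 \<and> mA (p i) (p i) = p i) \<and>
     (\<forall>i\<in>I. \<forall>j\<in>I. i \<noteq> j \<longrightarrow> mA (p i) (p j) = 0) \<and>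
     coinvariants sA sH u alpha = module.span sA (p ` I) \<and>
     \<comment> \<open>Galois map A (x)_{A^alpha} A -> A (x) H is injective and surjective\<close>
     (\<forall>t. teq sA sH (galois_map mA alpha t) [] \<longrightarrow> balanced_zero sA mA (coinvariants sA sH u alpha) t) \<and>
     (\<forall>v. \<exists>t. teq sA sH (galois_map mA alpha t) v)"

definition invariant_functional :: "('k::field \<Rightarrow> 'a::ab_group_add \<Rightarrow> 'a) \<Rightarrow> ('k \<Rightarrow> 'h::ab_group_add \<Rightarrow> 'h) \<Rightarrow> 'h
     \<Rightarrow> ('a \<Rightarrow> ('a \<times> 'h) list) \<Rightarrow> ('a \<Rightarrow> 'k) \<Rightarrow> bool" where
  "invariant_functional sA sH u alpha psiA \<longleftrightarrow>
     Vector_Spaces.linear sA ((*)::'k\<Rightarrow>'k\<Rightarrow>'k) psiA \<and>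
     (\<forall>x. (\<Sum>(a,h)\<leftarrow>alpha x. sH (psiA a) h) = sH (psiA x) u)"

definition left_complete :: "('a \<Rightarrow> 'a \<Rightarrow> 'a) \<Rightarrow> 'i set \<Rightarrow> ('i \<Rightarrow> 'a) \<Rightarrow> ('a \<Rightarrow> 'k::zero) \<Rightarrow> bool" where
  "left_complete mA I p psiA \<longleftrightarrow> (\<forall>i\<in>I. \<exists>x. psiA (mA (p i) x) \<noteq> 0)"

definition right_complete :: "('a \<Rightarrow> 'a \<Rightarrow> 'a) \<Rightarrow> 'i set \<Rightarrow> ('i \<Rightarrow> 'a) \<Rightarrow> ('a \<Rightarrow> 'k::zero) \<Rightarrow> bool" where
  "right_complete mA I p psiA \<longleftrightarrow> (\<forall>j\<in>I. \<exists>x. psiA (mA x (p j)) \<noteq> 0)"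

end

theory Submission
  imports Defs
begin


lemma vs_field: "vector_space ((*)::'k::field \<Rightarrow> 'k \<Rightarrow> 'k)"
  by unfold_locales (auto simp: algebra_simps)

lemma lin_add: "Vector_Spaces.linear s1 s2 f \<Longrightarrow> f (x + y) = f x + f y"
  by (simp add: Vector_Spaces.linear_iff)
lemma lin_scale: "Vector_Spaces.linear s1 s2 f \<Longrightarrow> f (s1 c x) = s2 c (f x)"
  by (simp add: Vector_Spaces.linear_iff)
lemma lin_0: "Vector_Spaces.linear s1 s2 f \<Longrightarrow> f 0 = 0"
  by (metis add_cancel_right_right lin_add add_0)
lemma lin_vs1: "Vector_Spaces.linear s1 s2 f \<Longrightarrow> vector_space s1"
  by (simp add: Vector_Spaces.linear_iff)
lemma lin_vs2: "Vector_Spaces.linear s1 s2 f \<Longrightarrow> vector_space s2"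
  by (simp add: Vector_Spaces.linear_iff)
lemma lin_sum_list: "Vector_Spaces.linear s1 s2 f \<Longrightarrow> f (sum_list xs) = sum_list (map f xs)"
  by (induction xs) (auto simp: lin_add lin_0)
lemma lin_comp: "Vector_Spaces.linear s1 s2 f \<Longrightarrow> Vector_Spaces.linear s2 s3 g \<Longrightarrow> Vector_Spaces.linear s1 s3 (\<lambda>x. g (f x))"
  using Vector_Spaces.linear_compose[of s1 s2 f s3 g] by (simp add: o_def)

lemma lin_sumlist:
  assumes "vector_space s1" "\<And>y. y \<in> set ys \<Longrightarrow> Vector_Spaces.linear s1 ((*)::'k::field\<Rightarrow>_) (F y)"
  shows "Vector_Spaces.linear s1 ((*)::'k::field\<Rightarrow>_) (\<lambda>x. \<Sum>y\<leftarrow>ys. F y x)"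
  using assms(2)
proof (induction ys)
  case Nil then show ?case using assms(1) vs_field by (auto simp: Vector_Spaces.linear_iff)
next
  case (Cons a ys)
  have l1: "Vector_Spaces.linear s1 (*) (F a)" using Cons by auto
  have l2: "Vector_Spaces.linear s1 (*) (\<lambda>x. \<Sum>y\<leftarrow>ys. F y x)" using Cons by auto
  show ?case using l1 l2 unfolding Vector_Spaces.linear_iff by (auto simp: algebra_simps)
qed

lemma lin_cmult: "Vector_Spaces.linear s1 ((*)::'k::field\<Rightarrow>_) f \<Longrightarrow> Vector_Spaces.linear s1 (*) (\<lambda>x. c * f x)"
  unfolding Vector_Spaces.linear_iff by (auto simp: algebra_simps)
lemma lin_multc: "Vector_Spaces.linear s1 ((*)::'k::field\<Rightarrow>_) f \<Longrightarrow> Vector_Spaces.linear s1 (*) (\<lambda>x. f x * c)"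
  unfolding Vector_Spaces.linear_iff by (auto simp: algebra_simps)

lemma sep:
  assumes vs: "vector_space s"
    and eq: "\<And>f. Vector_Spaces.linear s ((*)::'k::field\<Rightarrow>'k\<Rightarrow>'k) f \<Longrightarrow> f x = f y"
  shows "x = y"
proof (rule ccontr)
  assume ne: "x \<noteq> y"
  interpret vp: vector_space_pair s "(*)::'k\<Rightarrow>'k\<Rightarrow>'k" using vs vs_field
    by (simp add: vector_space_pair_def)
  have ind: "vp.vs1.independent {x - y}" using ne
    by (simp add: vp.vs1.dependent_single)
  obtain g where g: "Vector_Spaces.linear s (*) g" "g (x - y) = (1::'k)"
    using vp.linear_independent_extend[OF ind, of "\<lambda>_. 1"] by auto
  have "g x = g y" using eq g(1) by blast
  then have "g (x - y) = 0"
    using lin_add[OF g(1), of "x - y" y] by simp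
  then show False using g(2) by simp
qed

lemma lin_sum_set: "Vector_Spaces.linear s1 s2 f \<Longrightarrow> f (sum g F) = (\<Sum>a\<in>F. f (g a))"
  by (induction F rule: infinite_finite_induct) (auto simp: lin_add lin_0)

lemma sumlist_sum_swap: "(\<Sum>x\<leftarrow>xs. \<Sum>b\<in>F. g x b) = (\<Sum>b\<in>F. \<Sum>x\<leftarrow>xs. g x b)"
  by (induction xs) (auto simp: sum.distrib)

lemma sumlist_sum_swap2: "(\<Sum>(v,w)\<leftarrow>xs. \<Sum>b\<in>F. g v w b) = (\<Sum>b\<in>F. \<Sum>(v,w)\<leftarrow>xs. g v w b)"
  by (induction xs) (auto simp: sum.distrib)

lemma basis_expand:
  assumes "vector_space s"
  obtains r :: "'b::ab_group_add \<Rightarrow> 'b \<Rightarrow> 'k::field" where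
    "\<And>b. Vector_Spaces.linear s (*) (\<lambda>w. r w b)"
    "\<And>w. finite {b. r w b \<noteq> 0}"
    "\<And>w F. finite F \<Longrightarrow> {b. r w b \<noteq> 0} \<subseteq> F \<Longrightarrow> (\<Sum>b\<in>F. s (r w b) b) = w"
proof -
  interpret W: vector_space s by fact
  obtain Bs where Bs: "W.independent Bs" "UNIV \<subseteq> W.span Bs"
    using W.basis_exists[of UNIV] by blast
  have sp: "W.span Bs = UNIV" using Bs by auto
  show ?thesis
  proof (rule that[of "W.representation Bs"])
    show "Vector_Spaces.linear s (*) (\<lambda>w. W.representation Bs w b)" for b
      using W.linear_representation[OF Bs(1) sp] .
    show "finite {b. W.representation Bs w b \<noteq> 0}" for w
      by (rule W.finite_representation)
    show "(\<Sum>b\<in>F. s (W.representation Bs w b) b) = w" if "finite F" "{b. W.representation Bs w b \<noteq> 0} \<subseteq> F" for w F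
    proof -
      have "(\<Sum>b\<in>F. s (W.representation Bs w b) b) = (\<Sum>b | W.representation Bs w b \<noteq> 0. s (W.representation Bs w b) b)"
        by (rule sum.mono_neutral_right) (use that in auto)
      also have "\<dots> = w" using W.sum_nonzero_representation_eq[OF Bs(1)] sp by auto
      finally show ?thesis .
    qed
  qed
qed

lemma teq_bilin:
  assumes te: "teq sV sW t t'" and vsV: "vector_space sV" and vsW: "vector_space sW"
    and l1: "\<And>w. Vector_Spaces.linear sV ((*)::'k::field\<Rightarrow>'k\<Rightarrow>'k) (\<lambda>v. B v w)"
    and l2: "\<And>v. Vector_Spaces.linear sW ((*)::'k::field\<Rightarrow>'k\<Rightarrow>'k) (B v)"
  shows "(\<Sum>(v,w)\<leftarrow>t. B v w) = (\<Sum>(v,w)\<leftarrow>t'. B v w)"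
proof -
  obtain r :: "_ \<Rightarrow> _ \<Rightarrow> 'k" where r: "\<And>b. Vector_Spaces.linear sW (*) (\<lambda>w. r w b)"
    "\<And>w. finite {b. r w b \<noteq> 0}"
    "\<And>w F. finite F \<Longrightarrow> {b. r w b \<noteq> 0} \<subseteq> F \<Longrightarrow> (\<Sum>b\<in>F. sW (r w b) b) = w"
    by (rule basis_expand[OF vsW]) blast
  define F where "F = (\<Union>w\<in>snd ` set (t @ t'). {b. r w b \<noteq> 0})"
  have fF: "finite F" unfolding F_def using r(2) by auto
  have exp: "B v w = (\<Sum>b\<in>F. B v b * r w b)" if "w \<in> snd ` set (t @ t')" for v w
  proof -
    have sub: "{b. r w b \<noteq> 0} \<subseteq> F" using that unfolding F_def by blast
    have "B v w = B v (\<Sum>b\<in>F. sW (r w b) b)"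
      using r(3)[OF fF sub] by simp
    also have "\<dots> = (\<Sum>b\<in>F. r w b * B v b)"
      by (simp add: lin_sum_set[OF l2[of v]] lin_scale[OF l2[of v]])
    finally show ?thesis by (simp add: mult.commute)
  qed
  have key: "(\<Sum>(v,w)\<leftarrow>xs. B v w) = (\<Sum>b\<in>F. tev xs (\<lambda>v. B v b) (\<lambda>w. r w b))"
    if "set xs \<subseteq> set (t @ t')" for xs
  proof -
    have "(\<Sum>(v,w)\<leftarrow>xs. B v w) = (\<Sum>(v,w)\<leftarrow>xs. \<Sum>b\<in>F. B v b * r w b)"
      by (rule arg_cong[where f=sum_list], rule map_cong) (use that exp in force)+
    also have "\<dots> = (\<Sum>b\<in>F. \<Sum>(v,w)\<leftarrow>xs. B v b * r w b)"
      by (rule sumlist_sum_swap2)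
    finally show ?thesis by (simp add: tev_def)
  qed
  have "(\<Sum>(v,w)\<leftarrow>t. B v w) = (\<Sum>b\<in>F. tev t (\<lambda>v. B v b) (\<lambda>w. r w b))" by (rule key) auto
  also have "\<dots> = (\<Sum>b\<in>F. tev t' (\<lambda>v. B v b) (\<lambda>w. r w b))"
    using te l1 r(1) unfolding teq_def by auto
  also have "\<dots> = (\<Sum>(v,w)\<leftarrow>t'. B v w)" by (rule key[symmetric]) auto
  finally show ?thesis .
qed


lemma sumlist_sum_swap3: "(\<Sum>(u,v,w)\<leftarrow>xs. \<Sum>b\<in>F. g u v w b) = (\<Sum>b\<in>F. \<Sum>(u,v,w)\<leftarrow>xs. g u v w b)"
  by (induction xs) (auto simp: sum.distrib)

lemma teq3_trilin:
  assumes te: "teq3 sU sV sW t t'" and vsU: "vector_space sU" and vsV: "vector_space sV" and vsW: "vector_space sW"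
    and l1: "\<And>v w. Vector_Spaces.linear sU ((*)::'k::field\<Rightarrow>'k\<Rightarrow>'k) (\<lambda>u. T u v w)"
    and l2: "\<And>u w. Vector_Spaces.linear sV ((*)::'k::field\<Rightarrow>'k\<Rightarrow>'k) (\<lambda>v. T u v w)"
    and l3: "\<And>u v. Vector_Spaces.linear sW ((*)::'k::field\<Rightarrow>'k\<Rightarrow>'k) (T u v)"
  shows "(\<Sum>(u,v,w)\<leftarrow>t. T u v w) = (\<Sum>(u,v,w)\<leftarrow>t'. T u v w)"
proof -
  obtain rV :: "_ \<Rightarrow> _ \<Rightarrow> 'k" where rV: "\<And>b. Vector_Spaces.linear sV (*) (\<lambda>w. rV w b)"
    "\<And>w. finite {b. rV w b \<noteq> 0}"
    "\<And>w F. finite F \<Longrightarrow> {b. rV w b \<noteq> 0} \<subseteq> F \<Longrightarrow> (\<Sum>b\<in>F. sV (rV w b) b) = w"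
    by (rule basis_expand[OF vsV]) blast
  obtain rW :: "_ \<Rightarrow> _ \<Rightarrow> 'k" where rW: "\<And>b. Vector_Spaces.linear sW (*) (\<lambda>w. rW w b)"
    "\<And>w. finite {b. rW w b \<noteq> 0}"
    "\<And>w F. finite F \<Longrightarrow> {b. rW w b \<noteq> 0} \<subseteq> F \<Longrightarrow> (\<Sum>b\<in>F. sW (rW w b) b) = w"
    by (rule basis_expand[OF vsW]) blast
  define F1 where "F1 = (\<Union>x\<in>set (t @ t'). {b. rV (fst (snd x)) b \<noteq> 0})"
  define F2 where "F2 = (\<Union>x\<in>set (t @ t'). {b. rW (snd (snd x)) b \<noteq> 0})"
  have fF1: "finite F1" unfolding F1_def using rV(2) by auto
  have fF2: "finite F2" unfolding F2_def using rW(2) by auto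
  have exp: "T u v w = (\<Sum>b\<in>F1. \<Sum>c\<in>F2. T u b c * rV v b * rW w c)" if "(u,v,w) \<in> set (t @ t')" for u v w
  proof -
    have sub1: "{b. rV v b \<noteq> 0} \<subseteq> F1" using that unfolding F1_def by force
    have sub2: "{b. rW w b \<noteq> 0} \<subseteq> F2" using that unfolding F2_def by force
    have "T u v w = T u (\<Sum>b\<in>F1. sV (rV v b) b) w"
      using rV(3)[OF fF1 sub1] by simp
    also have "\<dots> = (\<Sum>b\<in>F1. rV v b * T u b w)"
      by (simp add: lin_sum_set[OF l2] lin_scale[OF l2])
    also have "\<dots> = (\<Sum>b\<in>F1. rV v b * T u b (\<Sum>c\<in>F2. sW (rW w c) c))"
      using rW(3)[OF fF2 sub2] by simp
    also have "\<dots> = (\<Sum>b\<in>F1. rV v b * (\<Sum>c\<in>F2. rW w c * T u b c))"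
      by (simp add: lin_sum_set[OF l3] lin_scale[OF l3])
    finally show ?thesis by (simp add: sum_distrib_left mult.commute mult.left_commute)
  qed
  have key: "(\<Sum>(u,v,w)\<leftarrow>xs. T u v w) = (\<Sum>b\<in>F1. \<Sum>c\<in>F2. tev3 xs (\<lambda>u. T u b c) (\<lambda>v. rV v b) (\<lambda>w. rW w c))"
    if "set xs \<subseteq> set (t @ t')" for xs
  proof -
    have "(\<Sum>(u,v,w)\<leftarrow>xs. T u v w) = (\<Sum>(u,v,w)\<leftarrow>xs. \<Sum>b\<in>F1. \<Sum>c\<in>F2. T u b c * rV v b * rW w c)"
      by (rule arg_cong[where f=sum_list], rule map_cong) (use that exp in force)+
    also have "\<dots> = (\<Sum>b\<in>F1. \<Sum>(u,v,w)\<leftarrow>xs. \<Sum>c\<in>F2. T u b c * rV v b * rW w c)"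
      by (rule sumlist_sum_swap3)
    also have "\<dots> = (\<Sum>b\<in>F1. \<Sum>c\<in>F2. \<Sum>(u,v,w)\<leftarrow>xs. T u b c * rV v b * rW w c)"
      by (rule sum.cong[OF refl], rule sumlist_sum_swap3)
    finally show ?thesis by (simp add: tev3_def)
  qed
  have "(\<Sum>(u,v,w)\<leftarrow>t. T u v w) = (\<Sum>b\<in>F1. \<Sum>c\<in>F2. tev3 t (\<lambda>u. T u b c) (\<lambda>v. rV v b) (\<lambda>w. rW w c))" by (rule key) auto
  also have "\<dots> = (\<Sum>b\<in>F1. \<Sum>c\<in>F2. tev3 t' (\<lambda>u. T u b c) (\<lambda>v. rV v b) (\<lambda>w. rW w c))"
    using te l1 rV(1) rW(1) unfolding teq3_def by auto
  also have "\<dots> = (\<Sum>(u,v,w)\<leftarrow>t'. T u v w)" by (rule key[symmetric]) auto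
  finally show ?thesis .
qed



lemma sum_galois: "(\<Sum>(x,h)\<leftarrow>galois_map mA alpha t. B x h) = (\<Sum>(a,b)\<leftarrow>t. \<Sum>(x,h)\<leftarrow>alpha b. B (mA a x) h)"
  by (induction t) (auto simp: galois_map_def o_def case_prod_beta sum_list_append)

lemma sum_tmult: "(\<Sum>(x,y)\<leftarrow>tmult mV mW t s. B x y) = (\<Sum>(a,b)\<leftarrow>t. \<Sum>(c,d)\<leftarrow>s. B (mV a c) (mW b d))"
  by (induction t) (auto simp: tmult_def o_def case_prod_beta sum_list_append)

lemma sum_ml3: "(\<Sum>(u,v,w)\<leftarrow>map_left3 F t. T u v w) = (\<Sum>(v,w)\<leftarrow>t. \<Sum>(a,b)\<leftarrow>F v. T a b w)"
  by (induction t) (auto simp: map_left3_def o_def case_prod_beta sum_list_append)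

lemma sum_mr3: "(\<Sum>(u,v,w)\<leftarrow>map_right3 F t. T u v w) = (\<Sum>(v,w)\<leftarrow>t. \<Sum>(a,b)\<leftarrow>F w. T v a b)"
  by (induction t) (auto simp: map_right3_def o_def case_prod_beta sum_list_append)

lemma sum_list_cong_set: "(\<And>x. x \<in> set xs \<Longrightarrow> f x = g x) \<Longrightarrow> sum_list (map f xs) = sum_list (map g xs)"
  by (metis map_cong)

lemma sumlist_mult_left: "c * (\<Sum>x\<leftarrow>xs. f x) = (\<Sum>x\<leftarrow>xs. c * f x)" for c :: "'k::comm_ring"
  by (induction xs) (auto simp: algebra_simps)

lemma indep_idem:
  fixes m :: "'a::ab_group_add \<Rightarrow> 'a \<Rightarrow> 'a" and s :: "'k::field \<Rightarrow> 'a \<Rightarrow> 'a"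
  assumes vs: "vector_space s"
    and assoc: "\<And>x y z. m (m x y) z = m x (m y z)"
    and lin: "\<And>y. Vector_Spaces.linear s s (\<lambda>x. m x y)"
    and z: "\<And>x. m x 0 = 0"
    and orth: "\<And>i j. i \<in> I \<Longrightarrow> j \<in> I \<Longrightarrow> i \<noteq> j \<Longrightarrow> m (p i) (p j) = 0"
    and vnz: "\<And>i. i \<in> I \<Longrightarrow> v i \<noteq> 0"
    and vp: "\<And>i. i \<in> I \<Longrightarrow> m (v i) (p i) = v i"
  shows "\<not> module.dependent s (v ` I) \<and> inj_on v I"
proof -
  interpret A: vector_space s by fact
  have vz: "m (v j) (p i) = 0" if "i \<in> I" "j \<in> I" "i \<noteq> j" for i j
    by (metis assoc orth[of j i] that vp z)
  have inj: "inj_on v I"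
  proof (rule inj_onI)
    fix i j assume ij: "i \<in> I" "j \<in> I" "v i = v j"
    show "i = j"
    proof (rule ccontr)
      assume "i \<noteq> j"
      then have "m (v j) (p i) = 0" using vz ij by auto
      then show False using vp[of i] ij vnz[of i] by auto
    qed
  qed
  have "A.independent (v ` I)"
    unfolding A.independent_explicit_finite_subsets
  proof (intro allI impI ballI)
    fix S u w assume S: "S \<subseteq> v ` I" "finite S" and sum0: "(\<Sum>v\<in>S. s (u v) v) = 0" and w: "w \<in> S"
    obtain i where i: "i \<in> I" "w = v i" using S w by auto
    have "0 = m (\<Sum>v\<in>S. s (u v) v) (p i)" using sum0 z lin_0[OF lin] by simp
    also have "\<dots> = (\<Sum>x\<in>S. s (u x) (m x (p i)))"
      by (simp add: lin_sum_set[OF lin] lin_scale[OF lin])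
    also have "\<dots> = s (u w) (m w (p i))"
    proof (rule sum.remove[OF S(2) w, THEN trans])
      have "(\<Sum>x\<in>S - {w}. s (u x) (m x (p i))) = 0"
      proof (rule sum.neutral, rule ballI)
        fix x assume x: "x \<in> S - {w}"
        then obtain j where j: "j \<in> I" "x = v j" using S by auto
        have "i \<noteq> j" using x j i by auto
        then show "s (u x) (m x (p i)) = 0" using vz[of i j] i j by simp
      qed
      then show "s (u w) (m w (p i)) + (\<Sum>x\<in>S - {w}. s (u x) (m x (p i))) = s (u w) (m w (p i))" by simp
    qed
    also have "\<dots> = s (u w) w" using vp i by simp
    finally show "u w = 0" using vnz[OF i(1)] i by simp
  qed
  then show ?thesis using inj by simp
qed

lemma functional_ones:
  fixes s :: "'k::field \<Rightarrow> 'a::ab_group_add \<Rightarrow> 'a"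
  assumes "vector_space s" "\<not> module.dependent s V"
  shows "\<exists>g. Vector_Spaces.linear s ((*)::'k\<Rightarrow>'k\<Rightarrow>'k) g \<and> (\<forall>x\<in>V. g x = 1)"
proof -
  interpret vp: vector_space_pair s "(*)::'k\<Rightarrow>'k\<Rightarrow>'k" using assms(1) vs_field
    by (simp add: vector_space_pair_def)
  show ?thesis using vp.linear_independent_extend[OF assms(2), of "\<lambda>_. 1"] by auto
qed



lemma sumlist_mult_right: "(\<Sum>x\<leftarrow>xs. f x) * c = (\<Sum>x\<leftarrow>xs. f x * c)" for c :: "'k::comm_ring"
  by (induction xs) (auto simp: algebra_simps)

lemma sl_swap: "(\<Sum>x\<leftarrow>xs. \<Sum>y\<leftarrow>ys. f x y) = (\<Sum>y\<leftarrow>ys. \<Sum>x\<leftarrow>xs. f x y)" for f :: "_ \<Rightarrow> _ \<Rightarrow> 'c::comm_monoid_add"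
  by (induction xs) (auto simp: sum_list_addf)

lemma sl_swap2: "(\<Sum>(a,b)\<leftarrow>xs. \<Sum>(c,d)\<leftarrow>ys. F a b c d) = (\<Sum>(c,d)\<leftarrow>ys. \<Sum>(a,b)\<leftarrow>xs. F a b c d)" for F :: "_ \<Rightarrow> _ \<Rightarrow> _ \<Rightarrow> _ \<Rightarrow> 'c::comm_monoid_add"
  using sl_swap[of "\<lambda>x y. F (fst x) (snd x) (fst y) (snd y)" ys xs] by (simp add: split_def)

lemma teq3_sym: "teq3 sU sV sW t t' \<Longrightarrow> teq3 sU sV sW t' t"
  unfolding teq3_def by metis

lemma zero_pairs: "(\<Sum>(a,b)\<leftarrow>t. (0::'b::monoid_add)) = 0"
  by (induction t) auto

locale GS =
  fixes sH :: "'k::field \<Rightarrow> 'h::ab_group_add \<Rightarrow> 'h"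
    and mH :: "'h \<Rightarrow> 'h \<Rightarrow> 'h" and uH :: 'h
    and D :: "'h \<Rightarrow> ('h \<times> 'h) list" and eps :: "'h \<Rightarrow> 'k" and S :: "'h \<Rightarrow> 'h"
    and sA :: "'k \<Rightarrow> 'a::ab_group_add \<Rightarrow> 'a" and mA :: "'a \<Rightarrow> 'a \<Rightarrow> 'a"
    and alpha :: "'a \<Rightarrow> ('a \<times> 'h) list"
    and I :: "'i set" and p :: "'i \<Rightarrow> 'a"
    and phi psi :: "'h \<Rightarrow> 'k"
  assumes hopf: "hopf_algebra sH mH uH D eps S"
    and gal: "I_galois_object sA mA sH mH uH D eps alpha I p"
    and phi_lin: "Vector_Spaces.linear sH (*) phi" and phi_nz: "\<exists>x. phi x \<noteq> 0"
    and phi_inv: "\<And>x. (\<Sum>(a,b)\<leftarrow>D x. sH (phi b) a) = sH (phi x) uH"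
    and psi_lin: "Vector_Spaces.linear sH (*) psi" and psi_nz: "\<exists>x. psi x \<noteq> 0"
    and psi_inv: "\<And>x. (\<Sum>(a,b)\<leftarrow>D x. sH (psi a) b) = sH (psi x) uH"
begin

lemma vsH: "vector_space sH" using hopf by (simp add: hopf_algebra_def k_algebra_def)
lemma mH_r: "Vector_Spaces.linear sH sH (mH x)" using hopf by (simp add: hopf_algebra_def k_algebra_def bilinear_mult_def)
lemma mH_l: "Vector_Spaces.linear sH sH (\<lambda>x. mH x y)" using hopf by (simp add: hopf_algebra_def k_algebra_def bilinear_mult_def)
lemma mH_assoc: "mH (mH x y) z = mH x (mH y z)" using hopf by (simp add: hopf_algebra_def k_algebra_def)
lemma unitL: "mH uH x = x" using hopf by (simp add: hopf_algebra_def)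
lemma unitR: "mH x uH = x" using hopf by (simp add: hopf_algebra_def)
lemma D_mult: "teq sH sH (D (mH x y)) (tmult mH mH (D x) (D y))" using hopf by (simp add: hopf_algebra_def)
lemma D_coassoc: "teq3 sH sH sH (map_left3 D (D x)) (map_right3 D (D x))" using hopf by (simp add: hopf_algebra_def)
lemma counitH: "(\<Sum>(a,b)\<leftarrow>D x. sH (eps a) b) = x" using hopf by (simp add: hopf_algebra_def)
lemma S_lin: "Vector_Spaces.linear sH sH S" using hopf by (simp add: hopf_algebra_def)
lemma antipode1: "(\<Sum>(a,b)\<leftarrow>D x. mH (S a) b) = sH (eps x) uH" using hopf by (simp add: hopf_algebra_def)
lemma antipode2: "(\<Sum>(a,b)\<leftarrow>D x. mH a (S b)) = sH (eps x) uH" using hopf by (simp add: hopf_algebra_def)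

lemma comod: "comodule_algebra sA mA sH mH D eps alpha" using gal by (simp add: I_galois_object_def)
lemma vsA: "vector_space sA" using comod by (simp add: comodule_algebra_def k_algebra_def)
lemma mA_r: "Vector_Spaces.linear sA sA (mA x)" using comod by (simp add: comodule_algebra_def k_algebra_def bilinear_mult_def)
lemma mA_l: "Vector_Spaces.linear sA sA (\<lambda>x. mA x y)" using comod by (simp add: comodule_algebra_def k_algebra_def bilinear_mult_def)
lemma mA_assoc: "mA (mA x y) z = mA x (mA y z)" using comod by (simp add: comodule_algebra_def k_algebra_def)
lemma al_tlin: "tlinear sA sA sH alpha" using comod by (simp add: comodule_algebra_def)
lemma al_mult: "teq sA sH (alpha (mA x y)) (tmult mA mH (alpha x) (alpha y))" using comod by (simp add: comodule_algebra_def)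
lemma al_coassoc: "teq3 sA sH sH (map_left3 alpha (alpha x)) (map_right3 D (alpha x))" using comod by (simp add: comodule_algebra_def)
lemma al_counit: "(\<Sum>(a,h)\<leftarrow>alpha x. sA (eps h) a) = x" using comod by (simp add: comodule_algebra_def)
lemma p_nz: "i \<in> I \<Longrightarrow> p i \<noteq> 0" using gal by (simp add: I_galois_object_def)
lemma p_idem: "i \<in> I \<Longrightarrow> mA (p i) (p i) = p i" using gal by (simp add: I_galois_object_def)
lemma p_orth: "i \<in> I \<Longrightarrow> j \<in> I \<Longrightarrow> i \<noteq> j \<Longrightarrow> mA (p i) (p j) = 0" using gal by (simp add: I_galois_object_def)
lemma gsurj: "\<exists>t. teq sA sH (galois_map mA alpha t) v" using gal by (simp add: I_galois_object_def)

lemma al_p: "i \<in> I \<Longrightarrow> teq sA sH (alpha (p i)) [(p i, uH)]"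
proof -
  assume i: "i \<in> I"
  interpret A: vector_space sA by (rule vsA)
  have "p i \<in> module.span sA (p ` I)" using i A.span_base by auto
  then have "p i \<in> coinvariants sA sH uH alpha" using gal by (simp add: I_galois_object_def)
  then show ?thesis by (simp add: coinvariants_def)
qed

lemma al_lin: "Vector_Spaces.linear sA (*) f \<Longrightarrow> Vector_Spaces.linear sH (*) g \<Longrightarrow>
   Vector_Spaces.linear sA ((*)::'k\<Rightarrow>'k\<Rightarrow>'k) (\<lambda>x. \<Sum>(a,h)\<leftarrow>alpha x. f a * g h)"
  using al_tlin unfolding tlinear_def tev_def by blast

definition psiT :: "('a \<Rightarrow> 'k) \<Rightarrow> 'a \<Rightarrow> 'k" where
  "psiT th x = (\<Sum>(a,h)\<leftarrow>alpha x. th a * psi h)"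
definition E :: "'a \<Rightarrow> 'a" where
  "E x = (\<Sum>(a,h)\<leftarrow>alpha x. sA (psi h) a)"

lemma psiT_E: "Vector_Spaces.linear sA (*) th \<Longrightarrow> th (E x) = psiT th x"
  by (simp add: E_def psiT_def lin_sum_list lin_scale o_def split_def mult.commute)

lemma psiT_inv:
  assumes th: "Vector_Spaces.linear sA (*) th"
  shows "invariant_functional sA sH uH alpha (psiT th)"
  unfolding invariant_functional_def
proof (intro conjI allI)
  show "Vector_Spaces.linear sA (*) (psiT th)"
    unfolding psiT_def[abs_def] by (rule al_lin[OF th psi_lin])
  fix x
  show "(\<Sum>(a,h)\<leftarrow>alpha x. sH (psiT th a) h) = sH (psiT th x) uH"
  proof (rule sep[OF vsH])
    fix g :: "'h \<Rightarrow> 'k" assume g: "Vector_Spaces.linear sH (*) g"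
    have "g (\<Sum>(a,h)\<leftarrow>alpha x. sH (psiT th a) h) = (\<Sum>(a,h)\<leftarrow>alpha x. psiT th a * g h)"
      by (simp add: lin_sum_list[OF g] lin_scale[OF g] o_def split_def)
    also have "\<dots> = (\<Sum>(a,h)\<leftarrow>alpha x. \<Sum>(b,c)\<leftarrow>alpha a. th b * psi c * g h)"
      by (simp add: psiT_def sumlist_mult_right split_def)
    also have "\<dots> = (\<Sum>(u,v,w)\<leftarrow>map_left3 alpha (alpha x). th u * psi v * g w)"
      by (simp add: sum_ml3)
    also have "\<dots> = (\<Sum>(u,v,w)\<leftarrow>map_right3 D (alpha x). th u * psi v * g w)"
      using al_coassoc[of x] th psi_lin g unfolding teq3_def tev3_def by blast
    also have "\<dots> = (\<Sum>(a,h)\<leftarrow>alpha x. \<Sum>(b,c)\<leftarrow>D h. th a * psi b * g c)"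
      by (simp add: sum_mr3)
    also have "\<dots> = (\<Sum>(a,h)\<leftarrow>alpha x. th a * psi h * g uH)"
    proof (rule sum_list_cong_set, clarify)
      fix a h
      have "(\<Sum>(b,c)\<leftarrow>D h. th a * psi b * g c) = th a * g (\<Sum>(b,c)\<leftarrow>D h. sH (psi b) c)"
        by (simp add: lin_sum_list[OF g] lin_scale[OF g] o_def split_def sumlist_mult_left mult.assoc)
      also have "\<dots> = th a * psi h * g uH" by (simp add: psi_inv lin_scale[OF g] mult.assoc)
      finally show "(\<Sum>(b,c)\<leftarrow>D h. th a * psi b * g c) = th a * psi h * g uH" .
    qed
    also have "\<dots> = g (sH (psiT th x) uH)"
      by (simp add: lin_scale[OF g] psiT_def sumlist_mult_right split_def)
    finally show "g (\<Sum>(a,h)\<leftarrow>alpha x. sH (psiT th a) h) = g (sH (psiT th x) uH)" .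
  qed
qed

lemma al_mult_p_right:
  assumes i: "i \<in> I" and f: "Vector_Spaces.linear sA (*) f" and g: "Vector_Spaces.linear sH (*) g"
  shows "(\<Sum>(a,h)\<leftarrow>alpha (mA x (p i)). f a * g h) = (\<Sum>(a,h)\<leftarrow>alpha x. f (mA a (p i)) * g h)"
proof -
  have "(\<Sum>(a,h)\<leftarrow>alpha (mA x (p i)). f a * g h) = (\<Sum>(a,h)\<leftarrow>tmult mA mH (alpha x) (alpha (p i)). f a * g h)"
    using al_mult[of x "p i"] f g unfolding teq_def tev_def by blast
  also have "\<dots> = (\<Sum>(a,b)\<leftarrow>alpha x. \<Sum>(c,d)\<leftarrow>alpha (p i). f (mA a c) * g (mH b d))"
    by (simp add: sum_tmult)
  also have "\<dots> = (\<Sum>(a,b)\<leftarrow>alpha x. \<Sum>(c,d)\<leftarrow>[(p i, uH)]. f (mA a c) * g (mH b d))"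
  proof (rule sum_list_cong_set, clarify)
    fix a b
    have l1: "Vector_Spaces.linear sA (*) (\<lambda>c. f (mA a c))" by (rule lin_comp[OF mA_r f])
    have l2: "Vector_Spaces.linear sH (*) (\<lambda>d. g (mH b d))" by (rule lin_comp[OF mH_r g])
    show "(\<Sum>(c,d)\<leftarrow>alpha (p i). f (mA a c) * g (mH b d)) = (\<Sum>(c,d)\<leftarrow>[(p i, uH)]. f (mA a c) * g (mH b d))"
      using al_p[OF i] l1 l2 unfolding teq_def tev_def by blast
  qed
  also have "\<dots> = (\<Sum>(a,h)\<leftarrow>alpha x. f (mA a (p i)) * g h)" by (simp add: unitR)
  finally show ?thesis .
qed

lemma al_mult_p_left:
  assumes i: "i \<in> I" and f: "Vector_Spaces.linear sA (*) f" and g: "Vector_Spaces.linear sH (*) g"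
  shows "(\<Sum>(a,h)\<leftarrow>alpha (mA (p i) x). f a * g h) = (\<Sum>(a,h)\<leftarrow>alpha x. f (mA (p i) a) * g h)"
proof -
  have "(\<Sum>(a,h)\<leftarrow>alpha (mA (p i) x). f a * g h) = (\<Sum>(a,h)\<leftarrow>tmult mA mH (alpha (p i)) (alpha x). f a * g h)"
    using al_mult[of "p i" x] f g unfolding teq_def tev_def by blast
  also have "\<dots> = (\<Sum>(a,b)\<leftarrow>alpha (p i). \<Sum>(c,d)\<leftarrow>alpha x. f (mA a c) * g (mH b d))"
    by (simp add: sum_tmult)
  also have "\<dots> = (\<Sum>(a,b)\<leftarrow>[(p i, uH)]. \<Sum>(c,d)\<leftarrow>alpha x. f (mA a c) * g (mH b d))"
  proof (rule teq_bilin[OF al_p[OF i] vsA vsH])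
    fix b
    show "Vector_Spaces.linear sA (*) (\<lambda>a. \<Sum>(c,d)\<leftarrow>alpha x. f (mA a c) * g (mH b d))"
      by (rule lin_sumlist[OF vsA]) (auto intro!: lin_multc lin_comp[OF mA_l f])
  next
    fix a
    show "Vector_Spaces.linear sH (*) (\<lambda>b. \<Sum>(c,d)\<leftarrow>alpha x. f (mA a c) * g (mH b d))"
      by (rule lin_sumlist[OF vsH]) (auto intro!: lin_cmult lin_comp[OF mH_l g])
  qed
  also have "\<dots> = (\<Sum>(a,h)\<leftarrow>alpha x. f (mA (p i) a) * g h)" by (simp add: unitL)
  finally show ?thesis .
qed

lemma E_right: "i \<in> I \<Longrightarrow> E (mA x (p i)) = mA (E x) (p i)"
proof (rule sep[OF vsA])
  fix f :: "'a \<Rightarrow> 'k" assume i: "i \<in> I" and f: "Vector_Spaces.linear sA (*) f"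
  have f2: "Vector_Spaces.linear sA (*) (\<lambda>y. f (mA y (p i)))" by (rule lin_comp[OF mA_l f])
  show "f (E (mA x (p i))) = f (mA (E x) (p i))"
    using psiT_E[OF f] psiT_E[OF f2] al_mult_p_right[OF i f psi_lin] by (simp add: psiT_def)
qed

lemma E_left: "i \<in> I \<Longrightarrow> E (mA (p i) x) = mA (p i) (E x)"
proof (rule sep[OF vsA])
  fix f :: "'a \<Rightarrow> 'k" assume i: "i \<in> I" and f: "Vector_Spaces.linear sA (*) f"
  have f2: "Vector_Spaces.linear sA (*) (\<lambda>y. f (mA (p i) y))" by (rule lin_comp[OF mA_r f])
  show "f (E (mA (p i) x)) = f (mA (p i) (E x))"
    using psiT_E[OF f] psiT_E[OF f2] al_mult_p_left[OF i f psi_lin] by (simp add: psiT_def)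
qed

lemma right_vec:
  assumes j: "j \<in> I"
  shows "\<exists>y. E y \<noteq> 0 \<and> mA (E y) (p j) = E y"
proof -
  obtain h0 where h0: "psi h0 \<noteq> 0" using psi_nz by blast
  obtain t where t: "teq sA sH (galois_map mA alpha t) [(p j, h0)]" using gsurj by blast
  have claim: "(\<Sum>(a,b)\<leftarrow>t. mA a (E (mA b (p j)))) = sA (psi h0) (p j)"
  proof (rule sep[OF vsA])
    fix f :: "'a \<Rightarrow> 'k" assume f: "Vector_Spaces.linear sA (*) f"
    have "f (\<Sum>(a,b)\<leftarrow>t. mA a (E (mA b (p j)))) = (\<Sum>(a,b)\<leftarrow>t. f (mA a (E (mA b (p j)))))"
      by (simp add: lin_sum_list[OF f] o_def split_def)
    also have "\<dots> = (\<Sum>(a,b)\<leftarrow>t. \<Sum>(c,h)\<leftarrow>alpha b. f (mA a (mA c (p j))) * psi h)"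
    proof (rule sum_list_cong_set, clarify)
      fix a b
      have fa: "Vector_Spaces.linear sA (*) (\<lambda>y. f (mA a y))" by (rule lin_comp[OF mA_r f])
      show "f (mA a (E (mA b (p j)))) = (\<Sum>(c,h)\<leftarrow>alpha b. f (mA a (mA c (p j))) * psi h)"
        using psiT_E[OF fa] al_mult_p_right[OF j fa psi_lin] by (simp add: psiT_def)
    qed
    also have "\<dots> = (\<Sum>(x,h)\<leftarrow>galois_map mA alpha t. f (mA x (p j)) * psi h)"
      by (simp add: sum_galois mA_assoc)
    also have "\<dots> = (\<Sum>(x,h)\<leftarrow>[(p j, h0)]. f (mA x (p j)) * psi h)"
      using t lin_comp[OF mA_l f] psi_lin unfolding teq_def tev_def by blast
    also have "\<dots> = f (sA (psi h0) (p j))" using p_idem[OF j] lin_scale[OF f] by (simp add: mult.commute)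
    finally show "f (\<Sum>(a,b)\<leftarrow>t. mA a (E (mA b (p j)))) = f (sA (psi h0) (p j))" .
  qed
  interpret A: vector_space sA by (rule vsA)
  have "sA (psi h0) (p j) \<noteq> 0" using h0 p_nz[OF j] by simp
  then obtain a b where ab: "(a,b) \<in> set t" "E (mA b (p j)) \<noteq> 0"
  proof -
    assume H: "\<And>a b. (a, b) \<in> set t \<Longrightarrow> E (mA b (p j)) \<noteq> 0 \<Longrightarrow> thesis"
    assume ne: "sA (psi h0) (p j) \<noteq> 0"
    show thesis
    proof (rule ccontr)
      assume "\<not> thesis"
      then have "\<And>a b. (a,b) \<in> set t \<Longrightarrow> E (mA b (p j)) = 0" using H by blast
      then have "(\<Sum>(a,b)\<leftarrow>t. mA a (E (mA b (p j)))) = (\<Sum>(a,b)\<leftarrow>t. 0)"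
        by (intro sum_list_cong_set) (auto simp: lin_0[OF mA_r])
      then show False using claim ne by (simp add: zero_pairs)
    qed
  qed
  show ?thesis
  proof (intro exI conjI)
    show "E (mA b (p j)) \<noteq> 0" by (rule ab(2))
    show "mA (E (mA b (p j))) (p j) = E (mA b (p j))"
      using E_right[OF j, of "mA b (p j)"] by (simp add: mA_assoc p_idem[OF j])
  qed
qed


lemma intid: "psi h * phi g = (\<Sum>(a,b)\<leftarrow>D g. psi (S a) * phi (mH b h))"
proof -
  define K where "K u v w = (\<Sum>(h1,h2)\<leftarrow>D h. psi (mH (S u) (mH v h1)) * phi (mH w h2))" for u v w
  have "(\<Sum>(a,b)\<leftarrow>D g. psi (S a) * phi (mH b h)) = (\<Sum>(a,b)\<leftarrow>D g. \<Sum>(c,d)\<leftarrow>D (mH b h). psi (mH (S a) c) * phi d)"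
  proof (rule sum_list_cong_set, clarify)
    fix a b
    have l: "Vector_Spaces.linear sH (*) (\<lambda>c. psi (mH (S a) c))" by (rule lin_comp[OF mH_r psi_lin])
    have "psi (S a) * phi (mH b h) = psi (mH (S a) (sH (phi (mH b h)) uH))"
      by (simp add: lin_scale[OF l] unitR mult.commute)
    also have "\<dots> = psi (mH (S a) (\<Sum>(c,d)\<leftarrow>D (mH b h). sH (phi d) c))" by (simp add: phi_inv)
    also have "\<dots> = (\<Sum>(c,d)\<leftarrow>D (mH b h). psi (mH (S a) c) * phi d)"
      by (simp add: lin_sum_list[OF l] lin_scale[OF l] o_def split_def mult.commute)
    finally show "psi (S a) * phi (mH b h) = (\<Sum>(c,d)\<leftarrow>D (mH b h). psi (mH (S a) c) * phi d)" .
  qed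
  also have "\<dots> = (\<Sum>(a,b)\<leftarrow>D g. \<Sum>(b1,b2)\<leftarrow>D b. \<Sum>(h1,h2)\<leftarrow>D h. psi (mH (S a) (mH b1 h1)) * phi (mH b2 h2))"
  proof (rule sum_list_cong_set, clarify)
    fix a b
    have l: "Vector_Spaces.linear sH (*) (\<lambda>c. psi (mH (S a) c))" by (rule lin_comp[OF mH_r psi_lin])
    have "(\<Sum>(c,d)\<leftarrow>D (mH b h). psi (mH (S a) c) * phi d) = (\<Sum>(c,d)\<leftarrow>tmult mH mH (D b) (D h). psi (mH (S a) c) * phi d)"
      using D_mult[of b h] l phi_lin unfolding teq_def tev_def by blast
    then show "(\<Sum>(c,d)\<leftarrow>D (mH b h). psi (mH (S a) c) * phi d) = (\<Sum>(b1,b2)\<leftarrow>D b. \<Sum>(h1,h2)\<leftarrow>D h. psi (mH (S a) (mH b1 h1)) * phi (mH b2 h2))"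
      by (simp add: sum_tmult)
  qed
  also have "\<dots> = (\<Sum>(u,v,w)\<leftarrow>map_right3 D (D g). K u v w)"
    by (simp add: sum_mr3 K_def)
  also have "\<dots> = (\<Sum>(u,v,w)\<leftarrow>map_left3 D (D g). K u v w)"
  proof (rule teq3_trilin[OF teq3_sym[OF D_coassoc[of g]] vsH vsH vsH])
    fix v w
    show "Vector_Spaces.linear sH (*) (\<lambda>u. K u v w)" unfolding K_def
      by (rule lin_sumlist[OF vsH]) (auto intro!: lin_multc lin_comp[OF S_lin] lin_comp[OF mH_l psi_lin])
  next
    fix u w
    show "Vector_Spaces.linear sH (*) (\<lambda>v. K u v w)" unfolding K_def
      by (rule lin_sumlist[OF vsH]) (auto intro!: lin_multc lin_comp[OF mH_l] lin_comp[OF mH_r psi_lin])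
  next
    fix u v
    show "Vector_Spaces.linear sH (*) (K u v)" unfolding K_def
      by (rule lin_sumlist[OF vsH]) (auto intro!: lin_cmult lin_comp[OF mH_l phi_lin])
  qed
  also have "\<dots> = (\<Sum>(a,b)\<leftarrow>D g. eps a * (\<Sum>(h1,h2)\<leftarrow>D h. psi h1 * phi (mH b h2)))"
  proof (simp only: sum_ml3, rule sum_list_cong_set, clarify)
    fix a b
    have "(\<Sum>(a1,a2)\<leftarrow>D a. K a1 a2 b) = (\<Sum>(h1,h2)\<leftarrow>D h. \<Sum>(a1,a2)\<leftarrow>D a. psi (mH (S a1) (mH a2 h1)) * phi (mH b h2))"
      unfolding K_def by (rule sl_swap2)
    also have "\<dots> = (\<Sum>(h1,h2)\<leftarrow>D h. eps a * (psi h1 * phi (mH b h2)))"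
    proof (rule sum_list_cong_set, clarify)
      fix h1 h2
      have l: "Vector_Spaces.linear sH (*) (\<lambda>x. psi (mH x h1))" by (rule lin_comp[OF mH_l psi_lin])
      have "(\<Sum>(a1,a2)\<leftarrow>D a. psi (mH (S a1) (mH a2 h1)) * phi (mH b h2))
          = psi (mH (\<Sum>(a1,a2)\<leftarrow>D a. mH (S a1) a2) h1) * phi (mH b h2)"
        by (simp add: lin_sum_list[OF l] o_def split_def mH_assoc sumlist_mult_right)
      also have "\<dots> = eps a * (psi h1 * phi (mH b h2))"
        by (simp add: antipode1 lin_scale[OF l] unitL)
      finally show "(\<Sum>(a1,a2)\<leftarrow>D a. psi (mH (S a1) (mH a2 h1)) * phi (mH b h2)) = eps a * (psi h1 * phi (mH b h2))" .
    qed
    also have "\<dots> = eps a * (\<Sum>(h1,h2)\<leftarrow>D h. psi h1 * phi (mH b h2))"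
      by (simp add: sumlist_mult_left split_def)
    finally show "(\<Sum>(a1,a2)\<leftarrow>D a. K a1 a2 b) = eps a * (\<Sum>(h1,h2)\<leftarrow>D h. psi h1 * phi (mH b h2))" .
  qed
  also have "\<dots> = (\<Sum>(a,b)\<leftarrow>D g. \<Sum>(h1,h2)\<leftarrow>D h. psi h1 * (eps a * phi (mH b h2)))"
    by (simp add: sumlist_mult_left split_def mult.left_commute)
  also have "\<dots> = (\<Sum>(h1,h2)\<leftarrow>D h. \<Sum>(a,b)\<leftarrow>D g. psi h1 * (eps a * phi (mH b h2)))"
    by (rule sl_swap2)
  also have "\<dots> = (\<Sum>(h1,h2)\<leftarrow>D h. psi h1 * phi (mH g h2))"
  proof (rule sum_list_cong_set, clarify)
    fix h1 h2
    have l: "Vector_Spaces.linear sH (*) (\<lambda>x. phi (mH x h2))" by (rule lin_comp[OF mH_l phi_lin])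
    have "phi (mH g h2) = phi (mH (\<Sum>(a,b)\<leftarrow>D g. sH (eps a) b) h2)" by (simp add: counitH)
    also have "\<dots> = (\<Sum>(a,b)\<leftarrow>D g. eps a * phi (mH b h2))"
      by (simp add: lin_sum_list[OF l] lin_scale[OF l] o_def split_def)
    finally show "(\<Sum>(a,b)\<leftarrow>D g. psi h1 * (eps a * phi (mH b h2))) = psi h1 * phi (mH g h2)"
      by (simp add: sumlist_mult_left split_def)
  qed
  also have "\<dots> = phi (mH g (\<Sum>(h1,h2)\<leftarrow>D h. sH (psi h1) h2))"
  proof -
    have l: "Vector_Spaces.linear sH (*) (\<lambda>x. phi (mH g x))" by (rule lin_comp[OF mH_r phi_lin])
    show ?thesis by (simp add: lin_sum_list[OF l] lin_scale[OF l] o_def split_def)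
  qed
  also have "\<dots> = psi h * phi g"
  proof -
    have l: "Vector_Spaces.linear sH (*) (\<lambda>x. phi (mH g x))" by (rule lin_comp[OF mH_r phi_lin])
    show ?thesis by (simp add: psi_inv lin_scale[OF l] unitR)
  qed
  finally show ?thesis by simp
qed

lemma psiS: "\<exists>k. psi (S k) \<noteq> 0"
proof (rule ccontr)
  assume "\<nexists>k. psi (S k) \<noteq> 0"
  then have z: "\<And>k. psi (S k) = 0" by blast
  obtain h where h: "psi h \<noteq> 0" using psi_nz by blast
  obtain g where g: "phi g \<noteq> 0" using phi_nz by blast
  have "psi h * phi g = 0" using intid[of h g] z by (simp add: zero_pairs)
  then show False using h g by simp
qed


lemma left_vec:
  assumes i: "i \<in> I"
  shows "\<exists>y. mA (p i) (E y) \<noteq> 0"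
proof -
  obtain k where k: "psi (S k) \<noteq> 0" using psiS by blast
  obtain t where t: "teq sA sH (galois_map mA alpha t) [(p i, k)]" using gsurj by blast
  have claim: "(\<Sum>(a,b)\<leftarrow>t. mA (mA (p i) (E a)) b) = sA (psi (S k)) (p i)"
  proof (rule sep[OF vsA])
    fix f :: "'a \<Rightarrow> 'k" assume f: "Vector_Spaces.linear sA (*) f"
    define P where "P = p i"
    define Bf where "Bf x h = (\<Sum>(y,c)\<leftarrow>alpha x. f (mA P y) * psi (mH c (S h)))" for x h
    define G where "G a x0 x1 h = (\<Sum>(a0,a1)\<leftarrow>alpha a. f (mA P (mA a0 x0)) * psi (mH (mH a1 x1) (S h)))" for a x0 x1 h
    have fP: "Vector_Spaces.linear sA (*) (\<lambda>y. f (mA P y))" by (rule lin_comp[OF mA_r f])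
    have "f (\<Sum>(a,b)\<leftarrow>t. mA (mA P (E a)) b) = (\<Sum>(a,b)\<leftarrow>t. f (mA (mA P (E a)) b))"
      by (simp add: lin_sum_list[OF f] o_def split_def)
    also have "\<dots> = (\<Sum>(a,b)\<leftarrow>t. \<Sum>(c,d)\<leftarrow>alpha a. f (mA (mA P c) b) * psi d)"
    proof (rule sum_list_cong_set, clarify)
      fix a b
      have fab: "Vector_Spaces.linear sA (*) (\<lambda>y. f (mA (mA P y) b))" by (rule lin_comp[OF mA_r lin_comp[OF mA_l f]])
      show "f (mA (mA P (E a)) b) = (\<Sum>(c,d)\<leftarrow>alpha a. f (mA (mA P c) b) * psi d)"
        using psiT_E[OF fab] by (simp add: psiT_def)
    qed
    also have "\<dots> = (\<Sum>(a,b)\<leftarrow>t. \<Sum>(x,h)\<leftarrow>alpha b. Bf (mA a x) h)"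
    proof (rule sum_list_cong_set, clarify)
      fix a b
      have "(\<Sum>(x,h)\<leftarrow>alpha b. Bf (mA a x) h) = (\<Sum>(x,h)\<leftarrow>alpha b. \<Sum>(x0,x1)\<leftarrow>alpha x. G a x0 x1 h)"
      proof (rule sum_list_cong_set, clarify)
        fix x h
        have l2: "Vector_Spaces.linear sH (*) (\<lambda>c. psi (mH c (S h)))" by (rule lin_comp[OF mH_l psi_lin])
        have "Bf (mA a x) h = (\<Sum>(y,c)\<leftarrow>tmult mA mH (alpha a) (alpha x). f (mA P y) * psi (mH c (S h)))"
          unfolding Bf_def using al_mult[of a x] fP l2 unfolding teq_def tev_def by blast
        also have "\<dots> = (\<Sum>(a0,a1)\<leftarrow>alpha a. \<Sum>(x0,x1)\<leftarrow>alpha x. f (mA P (mA a0 x0)) * psi (mH (mH a1 x1) (S h)))"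
          by (simp add: sum_tmult)
        also have "\<dots> = (\<Sum>(x0,x1)\<leftarrow>alpha x. G a x0 x1 h)"
          unfolding G_def by (rule sl_swap2)
        finally show "Bf (mA a x) h = (\<Sum>(x0,x1)\<leftarrow>alpha x. G a x0 x1 h)" .
      qed
      also have "\<dots> = (\<Sum>(u,v,w)\<leftarrow>map_left3 alpha (alpha b). G a u v w)" by (simp add: sum_ml3)
      also have "\<dots> = (\<Sum>(u,v,w)\<leftarrow>map_right3 D (alpha b). G a u v w)"
      proof (rule teq3_trilin[OF al_coassoc vsA vsH vsH])
        fix v w
        show "Vector_Spaces.linear sA (*) (\<lambda>u. G a u v w)" unfolding G_def
          by (rule lin_sumlist[OF vsA]) (auto intro!: lin_multc lin_comp[OF mA_r] lin_comp[OF mA_r f] f)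
      next
        fix u w
        show "Vector_Spaces.linear sH (*) (\<lambda>v. G a u v w)" unfolding G_def
          by (rule lin_sumlist[OF vsH]) (auto intro!: lin_cmult lin_comp[OF mH_r] lin_comp[OF mH_l psi_lin])
      next
        fix u v
        show "Vector_Spaces.linear sH (*) (G a u v)" unfolding G_def
          by (rule lin_sumlist[OF vsH]) (auto intro!: lin_cmult lin_comp[OF S_lin] lin_comp[OF mH_r psi_lin])
      qed
      also have "\<dots> = (\<Sum>(x,h)\<leftarrow>alpha b. eps h * (\<Sum>(a0,a1)\<leftarrow>alpha a. f (mA P (mA a0 x)) * psi a1))"
      proof (simp only: sum_mr3, rule sum_list_cong_set, clarify)
        fix x h
        have "(\<Sum>(h1,h2)\<leftarrow>D h. G a x h1 h2) = (\<Sum>(a0,a1)\<leftarrow>alpha a. \<Sum>(h1,h2)\<leftarrow>D h. f (mA P (mA a0 x)) * psi (mH (mH a1 h1) (S h2)))"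
          unfolding G_def by (rule sl_swap2)
        also have "\<dots> = (\<Sum>(a0,a1)\<leftarrow>alpha a. eps h * (f (mA P (mA a0 x)) * psi a1))"
        proof (rule sum_list_cong_set, clarify)
          fix a0 a1
          have l: "Vector_Spaces.linear sH (*) (\<lambda>z. psi (mH a1 z))" by (rule lin_comp[OF mH_r psi_lin])
          have "(\<Sum>(h1,h2)\<leftarrow>D h. f (mA P (mA a0 x)) * psi (mH (mH a1 h1) (S h2)))
             = f (mA P (mA a0 x)) * psi (mH a1 (\<Sum>(h1,h2)\<leftarrow>D h. mH h1 (S h2)))"
            by (simp add: lin_sum_list[OF l] o_def split_def mH_assoc sumlist_mult_left)
          also have "\<dots> = eps h * (f (mA P (mA a0 x)) * psi a1)"
            by (simp add: antipode2 lin_scale[OF l] unitR mult.left_commute)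
          finally show "(\<Sum>(h1,h2)\<leftarrow>D h. f (mA P (mA a0 x)) * psi (mH (mH a1 h1) (S h2))) = eps h * (f (mA P (mA a0 x)) * psi a1)" .
        qed
        also have "\<dots> = eps h * (\<Sum>(a0,a1)\<leftarrow>alpha a. f (mA P (mA a0 x)) * psi a1)"
          by (simp add: sumlist_mult_left split_def)
        finally show "(\<Sum>(h1,h2)\<leftarrow>D h. G a x h1 h2) = eps h * (\<Sum>(a0,a1)\<leftarrow>alpha a. f (mA P (mA a0 x)) * psi a1)" .
      qed
      also have "\<dots> = (\<Sum>(x,h)\<leftarrow>alpha b. \<Sum>(a0,a1)\<leftarrow>alpha a. psi a1 * (eps h * f (mA P (mA a0 x))))"
        by (simp add: sumlist_mult_left split_def mult.left_commute mult.commute)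
      also have "\<dots> = (\<Sum>(a0,a1)\<leftarrow>alpha a. \<Sum>(x,h)\<leftarrow>alpha b. psi a1 * (eps h * f (mA P (mA a0 x))))"
        by (rule sl_swap2)
      also have "\<dots> = (\<Sum>(c,d)\<leftarrow>alpha a. f (mA (mA P c) b) * psi d)"
      proof (rule sum_list_cong_set, clarify)
        fix a0 a1
        have l: "Vector_Spaces.linear sA (*) (\<lambda>z. f (mA P (mA a0 z)))" by (rule lin_comp[OF mA_r fP])
        have "f (mA (mA P a0) b) = f (mA P (mA a0 (\<Sum>(x,h)\<leftarrow>alpha b. sA (eps h) x)))" by (simp add: al_counit mA_assoc)
        also have "\<dots> = (\<Sum>(x,h)\<leftarrow>alpha b. eps h * f (mA P (mA a0 x)))"
          by (simp add: lin_sum_list[OF l] lin_scale[OF l] o_def split_def)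
        finally show "(\<Sum>(x,h)\<leftarrow>alpha b. psi a1 * (eps h * f (mA P (mA a0 x)))) = f (mA (mA P a0) b) * psi a1"
          by (simp add: sumlist_mult_left split_def mult.commute)
      qed
      finally show "(\<Sum>(c,d)\<leftarrow>alpha a. f (mA (mA P c) b) * psi d) = (\<Sum>(x,h)\<leftarrow>alpha b. Bf (mA a x) h)" by simp
    qed
    also have "\<dots> = (\<Sum>(x,h)\<leftarrow>galois_map mA alpha t. Bf x h)" by (simp add: sum_galois)
    also have "\<dots> = (\<Sum>(x,h)\<leftarrow>[(P,k)]. Bf x h)"
    proof (rule teq_bilin[OF t[folded P_def] vsA vsH])
      fix h
      have l2: "Vector_Spaces.linear sH (*) (\<lambda>c. psi (mH c (S h)))" by (rule lin_comp[OF mH_l psi_lin])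
      show "Vector_Spaces.linear sA (*) (\<lambda>x. Bf x h)" unfolding Bf_def by (rule al_lin[OF fP l2])
    next
      fix x
      show "Vector_Spaces.linear sH (*) (Bf x)" unfolding Bf_def
        by (rule lin_sumlist[OF vsH]) (auto intro!: lin_cmult lin_comp[OF S_lin] lin_comp[OF mH_r psi_lin])
    qed
    also have "\<dots> = Bf P k" by simp
    also have "\<dots> = (\<Sum>(y,c)\<leftarrow>[(P,uH)]. f (mA P y) * psi (mH c (S k)))"
    proof -
      have l2: "Vector_Spaces.linear sH (*) (\<lambda>c. psi (mH c (S k)))" by (rule lin_comp[OF mH_l psi_lin])
      show ?thesis unfolding Bf_def P_def using al_p[OF i] fP[unfolded P_def] l2 unfolding teq_def tev_def by blast
    qed
    also have "\<dots> = f (sA (psi (S k)) P)" using p_idem[OF i] lin_scale[OF f] by (simp add: P_def unitL mult.commute)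
    finally show "f (\<Sum>(a,b)\<leftarrow>t. mA (mA (p i) (E a)) b) = f (sA (psi (S k)) (p i))" by (simp add: P_def)
  qed
  interpret A: vector_space sA by (rule vsA)
  have ne: "sA (psi (S k)) (p i) \<noteq> 0" using k p_nz[OF i] by simp
  show ?thesis
  proof (rule ccontr)
    assume "\<not> ?thesis"
    then have "\<And>a b. (a,b) \<in> set t \<Longrightarrow> mA (mA (p i) (E a)) b = 0" using lin_0[OF mA_l] by auto
    then have "(\<Sum>(a,b)\<leftarrow>t. mA (mA (p i) (E a)) b) = (\<Sum>(a,b)\<leftarrow>t. 0)"
      by (intro sum_list_cong_set) auto
    then show False using claim ne by (simp add: zero_pairs)
  qed
qed


lemma result:
  "(\<exists>psiA. invariant_functional sA sH uH alpha psiA \<and> left_complete mA I p psiA) \<and>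
   (\<exists>psiA'. invariant_functional sA sH uH alpha psiA' \<and> right_complete mA I p psiA')"
proof
  have "\<forall>i\<in>I. \<exists>y. mA (p i) (E y) \<noteq> 0" using left_vec by blast
  then obtain yl where yl: "\<And>i. i \<in> I \<Longrightarrow> mA (p i) (E (yl i)) \<noteq> 0" by metis
  define w where "w i = mA (p i) (E (yl i))" for i
  have ind: "\<not> module.dependent sA (w ` I) \<and> inj_on w I"
  proof (rule indep_idem[OF vsA, where m="\<lambda>x y. mA y x" and p=p])
    show "\<And>x y z. mA z (mA y x) = mA (mA z y) x" by (simp add: mA_assoc)
    show "\<And>y. Vector_Spaces.linear sA sA (mA y)" by (rule mA_r)
    show "\<And>x. mA 0 x = 0" by (rule lin_0[OF mA_l])
    show "\<And>i j. i \<in> I \<Longrightarrow> j \<in> I \<Longrightarrow> i \<noteq> j \<Longrightarrow> mA (p j) (p i) = 0" by (simp add: p_orth)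
    show "\<And>i. i \<in> I \<Longrightarrow> w i \<noteq> 0" using yl by (simp add: w_def)
    show "\<And>i. i \<in> I \<Longrightarrow> mA (p i) (w i) = w i" by (simp add: w_def mA_assoc[symmetric] p_idem)
  qed
  obtain th where th: "Vector_Spaces.linear sA (*) th" "\<forall>x\<in>w ` I. th x = 1"
    using functional_ones[OF vsA] ind by blast
  show "\<exists>psiA. invariant_functional sA sH uH alpha psiA \<and> left_complete mA I p psiA"
  proof (intro exI conjI)
    show "invariant_functional sA sH uH alpha (psiT th)" by (rule psiT_inv[OF th(1)])
    show "left_complete mA I p (psiT th)" unfolding left_complete_def
    proof
      fix i assume i: "i \<in> I"
      have "psiT th (mA (p i) (yl i)) = th (w i)"
        using psiT_E[OF th(1), of "mA (p i) (yl i)"] E_left[OF i] by (simp add: w_def)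
      also have "\<dots> = 1" using th(2) i by blast
      finally have "psiT th (mA (p i) (yl i)) \<noteq> 0" by simp
      then show "\<exists>x. psiT th (mA (p i) x) \<noteq> 0" by blast
    qed
  qed
next
  have "\<forall>j\<in>I. \<exists>y. E y \<noteq> 0 \<and> mA (E y) (p j) = E y" using right_vec by blast
  then obtain yr where yr: "\<And>j. j \<in> I \<Longrightarrow> E (yr j) \<noteq> 0 \<and> mA (E (yr j)) (p j) = E (yr j)" by metis
  define v where "v j = E (yr j)" for j
  have ind: "\<not> module.dependent sA (v ` I) \<and> inj_on v I"
  proof (rule indep_idem[OF vsA, where m="mA" and p=p])
    show "\<And>x y z. mA (mA x y) z = mA x (mA y z)" by (simp add: mA_assoc)
    show "\<And>y. Vector_Spaces.linear sA sA (\<lambda>x. mA x y)" by (rule mA_l)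
    show "\<And>x. mA x 0 = 0" by (rule lin_0[OF mA_r])
    show "\<And>i j. i \<in> I \<Longrightarrow> j \<in> I \<Longrightarrow> i \<noteq> j \<Longrightarrow> mA (p i) (p j) = 0" by (simp add: p_orth)
    show "\<And>i. i \<in> I \<Longrightarrow> v i \<noteq> 0" using yr by (simp add: v_def)
    show "\<And>i. i \<in> I \<Longrightarrow> mA (v i) (p i) = v i" using yr by (simp add: v_def)
  qed
  obtain th where th: "Vector_Spaces.linear sA (*) th" "\<forall>x\<in>v ` I. th x = 1"
    using functional_ones[OF vsA] ind by blast
  show "\<exists>psiA'. invariant_functional sA sH uH alpha psiA' \<and> right_complete mA I p psiA'"
  proof (intro exI conjI)
    show "invariant_functional sA sH uH alpha (psiT th)" by (rule psiT_inv[OF th(1)])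
    show "right_complete mA I p (psiT th)" unfolding right_complete_def
    proof
      fix j assume j: "j \<in> I"
      have "psiT th (mA (yr j) (p j)) = th (v j)"
        using psiT_E[OF th(1), of "mA (yr j) (p j)"] E_right[OF j] yr[OF j] by (simp add: v_def)
      also have "\<dots> = 1" using th(2) j by blast
      finally have "psiT th (mA (yr j) (p j)) \<noteq> 0" by simp
      then show "\<exists>x. psiT th (mA x (p j)) \<noteq> 0" by blast
    qed
  qed
qed

end

theorem mainTheorem17:
  fixes sH :: "'k::field \<Rightarrow> 'h::ab_group_add \<Rightarrow> 'h"
    and mH :: "'h \<Rightarrow> 'h \<Rightarrow> 'h" and uH :: 'h
    and D :: "'h \<Rightarrow> ('h \<times> 'h) list" and eps :: "'h \<Rightarrow> 'k" and S :: "'h \<Rightarrow> 'h"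
    and sA :: "'k \<Rightarrow> 'a::ab_group_add \<Rightarrow> 'a" and mA :: "'a \<Rightarrow> 'a \<Rightarrow> 'a"
    and alpha :: "'a \<Rightarrow> ('a \<times> 'h) list"
    and I :: "'i set" and p :: "'i \<Rightarrow> 'a"
  assumes "hopf_algebra sH mH uH D eps S"
    and "has_invariant_functionals sH uH D"
    and "I_galois_object sA mA sH mH uH D eps alpha I p"
  shows "(\<exists>psiA. invariant_functional sA sH uH alpha psiA \<and> left_complete mA I p psiA) \<and>
         (\<exists>psiA'. invariant_functional sA sH uH alpha psiA' \<and> right_complete mA I p psiA')"
proof -
  obtain phi psi where pp: "Vector_Spaces.linear sH ((*)::'k\<Rightarrow>'k\<Rightarrow>'k) phi" "Vector_Spaces.linear sH ((*)::'k\<Rightarrow>'k\<Rightarrow>'k) psi"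
        "\<exists>x. phi x \<noteq> 0" "\<exists>x. psi x \<noteq> 0"
        "\<forall>x. (\<Sum>(a,b)\<leftarrow>D x. sH (phi b) a) = sH (phi x) uH"
        "\<forall>x. (\<Sum>(a,b)\<leftarrow>D x. sH (psi a) b) = sH (psi x) uH"
    using assms(2) unfolding has_invariant_functionals_def by blast
  interpret G: GS sH mH uH D eps S sA mA alpha I p phi psi
    by (intro GS.intro) (use assms(1,3) pp in auto)
  show ?thesis by (rule G.result)
qed


end
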